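(* Let $k\geq 2$ and $1\leq i\leq k-1$ be integers, and for each $1\leq j\leq i-1$ let $S_j$ be any triangle-free $(k-j)$-critical graph without isolated vertices. Let $U=U(S_1,\dots,S_{i-1})$ (for $i=1$, $U$ is a single vertex, which is active). Then: (1) For every active vertex $u$ of $U$, $U$ can be properly $(k-1)$-colored so that at most $i$ different colors appear at active vertices, and among active vertices one of these colors (the $i$th) appears only at $u$. (2) In any proper $(k-1)$-coloring of $U$, at least $i$ different colors occur as colors of active vertices. (3) If any edge is removed from $U$, the resulting graph can be properly $(k-1)$-colored so that at most $i-1$ colors occur at active vertices.
   Context: A graph is $r$-critical if it has chromatic number $r$ and removing any edge allows it to be properly $(r-1)$-colored. Given graphs $S_1,\dots,S_t$, the graph $U(S_1,\dots,S_t)$ is constructed as follows: take the disjoint union of the graphs $S_1,\dots,S_t$ together with a new independent set $A=\prod_{m=1}^t V(S_m)$ (the set of active vertices; its elements are $t$-tuples), and for each $m$ join each vertex $v\in V(S_m)$ to every $u\in A$ whose $m$th coordinate equals $v$. (Edges inside each $S_m$ are kept.) In the paper this graph, with $S_j$ triangle-free $(k-j)$-critical, is denoted $U^{k-1}_{k-i+1}=U(k-1,k-2,\dots,k-i+1)$. *)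

theory Defs
  imports Main "HOL-Library.FuncSet"
begin

type_synonym 'a graph = "'a set \<times> 'a set set"

definition verts :: "'a graph \<Rightarrow> 'a set" where "verts G = fst G"
definition edges :: "'a graph \<Rightarrow> 'a set set" where "edges G = snd G"

definition is_graph :: "'a graph \<Rightarrow> bool" where
  "is_graph G \<longleftrightarrow> finite (verts G) \<and> (\<forall>e\<in>edges G. e \<subseteq> verts G \<and> card e = 2)"

definition proper_coloring :: "'a graph \<Rightarrow> nat \<Rightarrow> ('a \<Rightarrow> nat) \<Rightarrow> bool" where
  "proper_coloring G r c \<longleftrightarrow> (\<forall>v\<in>verts G. c v < r) \<and>
     (\<forall>x y. {x, y} \<in> edges G \<longrightarrow> x \<noteq> y \<longrightarrow> c x \<noteq> c y)"

definition colorable :: "'a graph \<Rightarrow> nat \<Rightarrow> bool" where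
  "colorable G r \<longleftrightarrow> (\<exists>c. proper_coloring G r c)"

definition chromatic_number :: "'a graph \<Rightarrow> nat" where
  "chromatic_number G = (LEAST r. colorable G r)"

definition delete_edge :: "'a graph \<Rightarrow> 'a set \<Rightarrow> 'a graph" where
  "delete_edge G e = (verts G, edges G - {e})"

definition critical :: "'a graph \<Rightarrow> nat \<Rightarrow> bool" where
  "critical G r \<longleftrightarrow> chromatic_number G = r \<and>
     (\<forall>e\<in>edges G. colorable (delete_edge G e) (r - 1))"

definition triangle_free :: "'a graph \<Rightarrow> bool" where
  "triangle_free G \<longleftrightarrow> \<not> (\<exists>x y z. {x, y} \<in> edges G \<and> {y, z} \<in> edges G \<and> {x, z} \<in> edges G
                                \<and> x \<noteq> y \<and> y \<noteq> z \<and> x \<noteq> z)"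

definition no_isolated :: "'a graph \<Rightarrow> bool" where
  "no_isolated G \<longleftrightarrow> (\<forall>v\<in>verts G. \<exists>e\<in>edges G. v \<in> e)"

text \<open>Vertices of U(S_1,...,S_t): copies of vertices of S_m (tagged by m), and active
  vertices which are t-tuples, represented as extensional functions on {1..t}.\<close>
datatype 'a uvert = Base nat 'a | Act "nat \<Rightarrow> 'a"

definition active_tuples :: "nat \<Rightarrow> (nat \<Rightarrow> 'a graph) \<Rightarrow> (nat \<Rightarrow> 'a) set" where
  "active_tuples t S = (\<Pi>\<^sub>E m\<in>{1..t}. verts (S m))"

definition U_active :: "nat \<Rightarrow> (nat \<Rightarrow> 'a graph) \<Rightarrow> 'a uvert set" where
  "U_active t S = Act ` active_tuples t S"

definition U_graph :: "nat \<Rightarrow> (nat \<Rightarrow> 'a graph) \<Rightarrow> 'a uvert graph" where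
  "U_graph t S =
    ({Base m v | m v. m \<in> {1..t} \<and> v \<in> verts (S m)} \<union> U_active t S,
     {{Base m x, Base m y} | m x y. m \<in> {1..t} \<and> {x, y} \<in> edges (S m)} \<union>
     {{Base m (f m), Act f} | m f. m \<in> {1..t} \<and> f \<in> active_tuples t S})"

end

theory Submission
  imports Defs
begin

lemma recolor:
  assumes "proper_coloring G K c" "is_graph G"
  shows "colorable G (card (c ` verts G))"
proof -
  have fin: "finite (verts G)" using assms(2) unfolding is_graph_def by blast
  obtain g where g: "bij_betw g (c ` verts G) {0..<card (c ` verts G)}"
    using ex_bij_betw_finite_nat fin by blast
  have "proper_coloring G (card (c ` verts G)) (g \<circ> c)"
    unfolding proper_coloring_def
  proof (intro conjI allI impI ballI)
    fix v assume "v \<in> verts G" thus "(g \<circ> c) v < card (c ` verts G)"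
      using g by (auto simp: bij_betw_def)
  next
    fix x y assume e: "{x, y} \<in> edges G" "x \<noteq> y"
    hence "c x \<noteq> c y" using assms(1) unfolding proper_coloring_def by blast
    moreover have "x \<in> verts G" "y \<in> verts G" using e assms(2) unfolding is_graph_def by auto
    ultimately show "(g \<circ> c) x \<noteq> (g \<circ> c) y" using g
      by (auto simp: bij_betw_def inj_on_def)
  qed
  thus ?thesis unfolding colorable_def by blast
qed

lemma colorable_card: assumes "is_graph G" shows "colorable G (card (verts G))"
proof -
  have fin: "finite (verts G)" using assms unfolding is_graph_def by blast
  obtain g where g: "bij_betw g (verts G) {0..<card (verts G)}"
    using ex_bij_betw_finite_nat fin by blast
  have "proper_coloring G (card (verts G)) g"
    unfolding proper_coloring_def
  proof (intro conjI allI impI ballI)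
    fix v assume "v \<in> verts G" thus "g v < card (verts G)"
      using g by (auto simp: bij_betw_def)
  next
    fix x y assume e: "{x, y} \<in> edges G" "x \<noteq> y"
    moreover have "x \<in> verts G" "y \<in> verts G" using e assms unfolding is_graph_def by auto
    ultimately show "g x \<noteq> g y" using g
      by (auto simp: bij_betw_def inj_on_def)
  qed
  thus ?thesis unfolding colorable_def by blast
qed

lemma chrom_colorable: "is_graph G \<Longrightarrow> colorable G (chromatic_number G)"
  unfolding chromatic_number_def by (rule LeastI, rule colorable_card)

lemma chrom_le: "is_graph G \<Longrightarrow> proper_coloring G K c \<Longrightarrow> chromatic_number G \<le> card (c ` verts G)"
  unfolding chromatic_number_def by (rule Least_le, rule recolor)

lemma proper_U_del:
  assumes "\<forall>m\<in>{1..t}. \<forall>v\<in>verts (S m). c (Base m v) < r"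
    and "\<forall>f\<in>active_tuples t S. c (Act f) < r"
    and "\<forall>m\<in>{1..t}. \<forall>a b. {a,b} \<in> edges (S m) \<longrightarrow> {Base m a, Base m b} \<notin> X \<longrightarrow> a \<noteq> b \<longrightarrow> c (Base m a) \<noteq> c (Base m b)"
    and "\<forall>m\<in>{1..t}. \<forall>f\<in>active_tuples t S. {Base m (f m), Act f} \<notin> X \<longrightarrow> c (Base m (f m)) \<noteq> c (Act f)"
  shows "proper_coloring (verts (U_graph t S), edges (U_graph t S) - X) r c"
  unfolding proper_coloring_def
proof (intro conjI allI impI ballI)
  fix v assume "v \<in> verts (verts (U_graph t S), edges (U_graph t S) - X)"
  thus "c v < r" using assms(1,2) by (auto simp: verts_def U_graph_def U_active_def)
next
  fix x y assume e: "{x, y} \<in> edges (verts (U_graph t S), edges (U_graph t S) - X)" "x \<noteq> y"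
  hence nX: "{x,y} \<notin> X" by (simp add: edges_def)
  from e have "{x,y} \<in> {{Base m x, Base m y} | m x y. m \<in> {1..t} \<and> {x, y} \<in> edges (S m)} \<or>
     {x,y} \<in> {{Base m (f m), Act f} | m f. m \<in> {1..t} \<and> f \<in> active_tuples t S}"
    by (simp add: edges_def U_graph_def)
  thus "c x \<noteq> c y"
  proof
    assume "{x,y} \<in> {{Base m x, Base m y} | m x y. m \<in> {1..t} \<and> {x, y} \<in> edges (S m)}"
    then obtain m a b where m: "m \<in> {1..t}" "{a,b} \<in> edges (S m)" "{x,y} = {Base m a, Base m b}" by blast
    have disj: "(x = Base m a \<and> y = Base m b) \<or> (x = Base m b \<and> y = Base m a)" using m by (auto simp: doubleton_eq_iff)
    have "{b,a} \<in> edges (S m)" using m by (simp add: insert_commute)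
    from disj show ?thesis
    proof
      assume xy: "x = Base m a \<and> y = Base m b"
      hence "a \<noteq> b" using e(2) by auto
      thus ?thesis using xy assms(3) m nX by auto
    next
      assume xy: "x = Base m b \<and> y = Base m a"
      hence "b \<noteq> a" using e(2) by auto
      moreover have "{Base m b, Base m a} \<notin> X" using nX xy by auto
      ultimately show ?thesis using xy assms(3) m \<open>{b,a} \<in> edges (S m)\<close> by blast
    qed
  next
    assume "{x,y} \<in> {{Base m (f m), Act f} | m f. m \<in> {1..t} \<and> f \<in> active_tuples t S}"
    then obtain m f where m: "m \<in> {1..t}" "f \<in> active_tuples t S" "{x,y} = {Base m (f m), Act f}" by blast
    hence "(x = Base m (f m) \<and> y = Act f) \<or> (x = Act f \<and> y = Base m (f m))" by (auto simp: doubleton_eq_iff)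
    thus ?thesis
    proof
      assume xy: "x = Base m (f m) \<and> y = Act f"
      thus ?thesis using assms(4) m nX by auto
    next
      assume xy: "x = Act f \<and> y = Base m (f m)"
      have "{Base m (f m), Act f} \<notin> X" using nX xy by (auto simp: insert_commute)
      hence "c (Base m (f m)) \<noteq> c (Act f)" using assms(4) m by blast
      thus ?thesis using xy by simp
    qed
  qed
qed

lemma U_eq: "(verts (U_graph t S), edges (U_graph t S) - {}) = U_graph t S"
  by (simp add: verts_def edges_def)

lemma cover:
  "finite C \<Longrightarrow> card C \<le> s \<Longrightarrow> (\<forall>m\<in>{1..s}. card (C - D m) < m) \<Longrightarrow>
   \<exists>M g. M \<subseteq> {1..s} \<and> (\<forall>m\<in>M. g m \<in> D m) \<and> C \<subseteq> g ` M"
proof (induction s arbitrary: C)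
  case 0 thus ?case by auto
next
  case (Suc s)
  show ?case
  proof (cases "card C \<le> s")
    case True
    then obtain M g where "M \<subseteq> {1..s}" "\<forall>m\<in>M. g m \<in> D m" "C \<subseteq> g ` M"
      using Suc.IH[of C] Suc.prems by auto
    thus ?thesis by (intro exI[of _ M] exI[of _ g]) auto
  next
    case False
    hence cC: "card C = Suc s" using Suc.prems by simp
    have "card (C - D (Suc s)) < card C" using Suc.prems(3) cC by auto
    hence "C - D (Suc s) \<noteq> C" by auto
    then obtain a where a: "a \<in> C" "a \<in> D (Suc s)" by auto
    have c1: "card (C - {a}) \<le> s" using cC a Suc.prems(1) by simp
    have c2: "\<forall>m\<in>{1..s}. card (C - {a} - D m) < m"
    proof
      fix m assume m: "m \<in> {1..s}"
      have "card (C - {a} - D m) \<le> card (C - D m)" using Suc.prems(1) by (intro card_mono) auto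
      also have "\<dots> < m" using Suc.prems(3) m by auto
      finally show "card (C - {a} - D m) < m" .
    qed
    obtain M g where Mg: "M \<subseteq> {1..s}" "\<forall>m\<in>M. g m \<in> D m" "C - {a} \<subseteq> g ` M"
      using Suc.IH[OF _ c1 c2] Suc.prems(1) by auto
    have "Suc s \<notin> M" using Mg(1) by auto
    hence "\<forall>m\<in>M. (g(Suc s := a)) m = g m" by auto
    show ?thesis
      apply (intro exI[of _ "insert (Suc s) M"] exI[of _ "g(Suc s := a)"])
      using Mg a \<open>Suc s \<notin> M\<close> by (auto simp: image_iff)
  qed
qed

definition actc :: "nat \<Rightarrow> (nat \<Rightarrow> 'a \<Rightarrow> nat) \<Rightarrow> (nat \<Rightarrow> 'a) \<Rightarrow> nat" where
  "actc t b f = (if \<exists>j\<in>{1..t}. b j (f j) \<noteq> j - 1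
      then (LEAST j. j \<in> {1..t} \<and> b j (f j) \<noteq> j - 1) - 1 else t)"

lemma actc_lt:
  assumes "j \<in> {1..t}" "b j (f j) \<noteq> j - 1"
  shows "actc t b f < t"
proof -
  let ?P = "\<lambda>j. j \<in> {1..t} \<and> b j (f j) \<noteq> j - 1"
  define j0 where "j0 = (LEAST j. ?P j)"
  have "?P j0" unfolding j0_def using assms by (intro LeastI[of ?P j]) auto
  moreover have "actc t b f = j0 - 1" using assms unfolding actc_def j0_def by auto
  ultimately show ?thesis by auto
qed

lemma actc_le: "actc t b f \<le> t"
proof (cases "\<exists>j\<in>{1..t}. b j (f j) \<noteq> j - 1")
  case True thus ?thesis using actc_lt[of _ t b f] by fastforce
qed (simp add: actc_def)

lemma actc_ne:
  assumes "j \<in> {1..t}" "\<forall>j\<in>{1..t}. j - 1 \<le> b j (f j)"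
  shows "actc t b f \<noteq> b j (f j)"
proof (cases "\<exists>j\<in>{1..t}. b j (f j) \<noteq> j - 1")
  case True
  let ?P = "\<lambda>j. j \<in> {1..t} \<and> b j (f j) \<noteq> j - 1"
  define j0 where "j0 = (LEAST j. ?P j)"
  obtain j1 where j1: "?P j1" using True by blast
  have P0: "?P j0" unfolding j0_def by (rule LeastI[of ?P j1, OF j1])
  have below: "b j' (f j') = j' - 1" if "j' < j0" "j' \<in> {1..t}" for j'
  proof -
    have "\<not> ?P j'" using that(1) unfolding j0_def by (rule not_less_Least)
    thus ?thesis using that(2) by simp
  qed
  have ac: "actc t b f = j0 - 1" using True unfolding actc_def j0_def by simp
  show ?thesis
  proof (cases j j0 rule: linorder_cases)
    case less
    have "b j (f j) = j - 1" using below[of j] less assms(1) by blast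
    moreover have "1 \<le> j" "1 \<le> j0" using P0 assms(1) by auto
    ultimately show ?thesis using ac less by simp
  next
    case equal thus ?thesis using P0 ac by simp
  next
    case greater
    have "j - 1 \<le> b j (f j)" using assms by blast
    moreover have "1 \<le> j0" using P0 by simp
    ultimately have "j0 - 1 < b j (f j)" using greater by linarith
    thus ?thesis using ac by simp
  qed
next
  case False thus ?thesis using assms unfolding actc_def by auto
qed

lemma crit_vertex:
  assumes "is_graph G" "no_isolated G" "critical G r" "v \<in> verts G"
  shows "\<exists>d. (\<forall>w\<in>verts G. d w < r - 1) \<and>
     (\<forall>x y. {x,y} \<in> edges G \<longrightarrow> x \<noteq> y \<longrightarrow> x \<noteq> v \<longrightarrow> y \<noteq> v \<longrightarrow> d x \<noteq> d y)"
proof -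
  obtain e where e: "e \<in> edges G" "v \<in> e" using assms(2,4) unfolding no_isolated_def by blast
  then obtain d where d: "proper_coloring (delete_edge G e) (r - 1) d"
    using assms(3) unfolding critical_def colorable_def by blast
  show ?thesis
  proof (intro exI[of _ d] conjI allI impI ballI)
    fix w assume "w \<in> verts G" thus "d w < r - 1" using d
      unfolding proper_coloring_def delete_edge_def by (simp add: verts_def)
  next
    fix x y assume xy: "{x,y} \<in> edges G" "x \<noteq> y" "x \<noteq> v" "y \<noteq> v"
    hence "{x,y} \<noteq> e" using e by auto
    hence "{x,y} \<in> edges (delete_edge G e)" using xy unfolding delete_edge_def by (simp add: edges_def)
    thus "d x \<noteq> d y" using d xy unfolding proper_coloring_def by blast
  qed
qed

lemma crit_edge:
  assumes "critical G r" "e \<in> edges G"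
  shows "\<exists>d. (\<forall>w\<in>verts G. d w < r - 1) \<and>
     (\<forall>x y. {x,y} \<in> edges G \<longrightarrow> {x,y} \<noteq> e \<longrightarrow> x \<noteq> y \<longrightarrow> d x \<noteq> d y)"
proof -
  obtain d where d: "proper_coloring (delete_edge G e) (r - 1) d"
    using assms unfolding critical_def colorable_def by blast
  show ?thesis
  proof (intro exI[of _ d] conjI allI impI ballI)
    fix w assume "w \<in> verts G" thus "d w < r - 1" using d
      unfolding proper_coloring_def delete_edge_def by (simp add: verts_def)
  next
    fix x y assume xy: "{x,y} \<in> edges G" "{x,y} \<noteq> e" "x \<noteq> y"
    hence "{x,y} \<in> edges (delete_edge G e)" unfolding delete_edge_def by (simp add: edges_def)
    thus "d x \<noteq> d y" using d xy unfolding proper_coloring_def by blast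
  qed
qed

lemma crit_col:
  assumes "is_graph G" "critical G r"
  shows "\<exists>d. (\<forall>w\<in>verts G. d w < r) \<and> (\<forall>x y. {x,y} \<in> edges G \<longrightarrow> x \<noteq> y \<longrightarrow> d x \<noteq> d y)"
  using chrom_colorable[OF assms(1)] assms(2) unfolding critical_def colorable_def proper_coloring_def
  by auto

lemma constr1:
  assumes k: "t + 2 \<le> k"
    and SS: "\<forall>j\<in>{1..t}. is_graph (S j) \<and> critical (S j) (k - j) \<and> no_isolated (S j)"
    and h: "h \<in> active_tuples t S"
  shows "\<exists>b. (\<forall>j\<in>{1..t}. \<forall>v\<in>verts (S j). b j v < k - 1 \<and> j - 1 \<le> b j v \<and> (b j v = j - 1 \<longleftrightarrow> v = h j))
     \<and> (\<forall>j\<in>{1..t}. \<forall>a a'. {a,a'} \<in> edges (S j) \<longrightarrow> a \<noteq> a' \<longrightarrow> b j a \<noteq> b j a')"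
proof -
  have "\<forall>j\<in>{1..t}. \<exists>d. (\<forall>w\<in>verts (S j). d w < k - j - 1) \<and>
     (\<forall>x y. {x,y} \<in> edges (S j) \<longrightarrow> x \<noteq> y \<longrightarrow> x \<noteq> h j \<longrightarrow> y \<noteq> h j \<longrightarrow> d x \<noteq> d y)"
  proof
    fix j assume j: "j \<in> {1..t}"
    have "h j \<in> verts (S j)" using h j unfolding active_tuples_def by auto
    thus "\<exists>d. (\<forall>w\<in>verts (S j). d w < k - j - 1) \<and>
     (\<forall>x y. {x,y} \<in> edges (S j) \<longrightarrow> x \<noteq> y \<longrightarrow> x \<noteq> h j \<longrightarrow> y \<noteq> h j \<longrightarrow> d x \<noteq> d y)"
      using crit_vertex[of "S j" "k - j" "h j"] SS j by auto
  qed
  then obtain d where d: "\<forall>j\<in>{1..t}. (\<forall>w\<in>verts (S j). d j w < k - j - 1) \<and>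
     (\<forall>x y. {x,y} \<in> edges (S j) \<longrightarrow> x \<noteq> y \<longrightarrow> x \<noteq> h j \<longrightarrow> y \<noteq> h j \<longrightarrow> d j x \<noteq> d j y)"
    by (rule bchoice[THEN exE]) blast
  define b where "b j v = (if v = h j then j - 1 else d j v + j)" for j v
  show ?thesis
  proof (intro exI[of _ b] conjI ballI allI impI)
    fix j v assume j: "j \<in> {1..t}" and v: "v \<in> verts (S j)"
    show "b j v < k - 1" using d j v k unfolding b_def by force
    show "j - 1 \<le> b j v" unfolding b_def by auto
    show "b j v = j - 1 \<longleftrightarrow> v = h j" unfolding b_def using j by auto
  next
    fix j a a' assume j: "j \<in> {1..t}" and e: "{a,a'} \<in> edges (S j)" "a \<noteq> a'"
    show "b j a \<noteq> b j a'" using d j e unfolding b_def by auto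
  qed
qed

lemma constr3:
  assumes k: "t + 2 \<le> k"
    and SS: "\<forall>j\<in>{1..t}. is_graph (S j) \<and> critical (S j) (k - j) \<and> no_isolated (S j)"
    and m: "m \<in> {1..t}" and e: "{x,y} \<in> edges (S m)"
  shows "\<exists>b. (\<forall>j\<in>{1..t}. \<forall>v\<in>verts (S j). b j v < k - 1 \<and> j - 1 \<le> b j v)
     \<and> (\<forall>v\<in>verts (S m). b m v \<noteq> m - 1)
     \<and> (\<forall>j\<in>{1..t}. \<forall>a a'. {a,a'} \<in> edges (S j) \<longrightarrow> (j = m \<longrightarrow> {a,a'} \<noteq> {x,y}) \<longrightarrow> a \<noteq> a' \<longrightarrow> b j a \<noteq> b j a')"
proof -
  have "\<forall>j\<in>{1..t}. \<exists>d. (\<forall>w\<in>verts (S j). d w < k - j) \<and>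
     (\<forall>x y. {x,y} \<in> edges (S j) \<longrightarrow> x \<noteq> y \<longrightarrow> d x \<noteq> d y)"
    using crit_col SS by blast
  then obtain d where d: "\<forall>j\<in>{1..t}. (\<forall>w\<in>verts (S j). d j w < k - j) \<and>
     (\<forall>x y. {x,y} \<in> edges (S j) \<longrightarrow> x \<noteq> y \<longrightarrow> d j x \<noteq> d j y)"
    by (rule bchoice[THEN exE]) blast
  obtain d' where d': "(\<forall>w\<in>verts (S m). d' w < k - m - 1) \<and>
     (\<forall>a a'. {a,a'} \<in> edges (S m) \<longrightarrow> {a,a'} \<noteq> {x,y} \<longrightarrow> a \<noteq> a' \<longrightarrow> d' a \<noteq> d' a')"
    using crit_edge[of "S m" "k - m" "{x,y}"] SS m e by auto
  define b where "b j v = (if j = m then d' v + m else d j v + (j - 1))" for j v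
  show ?thesis
  proof (intro exI[of _ b] conjI ballI allI impI)
    fix j v assume j: "j \<in> {1..t}" and v: "v \<in> verts (S j)"
    show "b j v < k - 1" using d d' j v k m unfolding b_def by force
    show "j - 1 \<le> b j v" unfolding b_def by auto
  next
    fix v assume "v \<in> verts (S m)" thus "b m v \<noteq> m - 1" using m unfolding b_def by auto
  next
    fix j a a' assume j: "j \<in> {1..t}" and e: "{a,a'} \<in> edges (S j)" "j = m \<longrightarrow> {a,a'} \<noteq> {x,y}" "a \<noteq> a'"
    show "b j a \<noteq> b j a'"
    proof (cases "j = m")
      case True
      hence "d' a \<noteq> d' a'" using d' e by blast
      thus ?thesis using True unfolding b_def by simp
    next
      case False
      hence "d j a \<noteq> d j a'" using d j e by blast
      moreover have "1 \<le> j" using j by simp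
      ultimately show ?thesis using False unfolding b_def by simp
    qed
  qed
qed

lemma part2:
  assumes k: "t + 2 \<le> k"
    and SS: "\<forall>j\<in>{1..t}. is_graph (S j) \<and> critical (S j) (k - j)"
    and c: "proper_coloring (U_graph t S) (k - 1) c"
  shows "t + 1 \<le> card (c ` U_active t S)"
proof (rule ccontr)
  assume "\<not> t + 1 \<le> card (c ` U_active t S)"
  hence cC: "card (c ` U_active t S) \<le> t" by simp
  let ?C = "c ` U_active t S"
  have cb: "\<And>z. z \<in> verts (U_graph t S) \<Longrightarrow> c z < k - 1" using c unfolding proper_coloring_def by blast
  have ce: "\<And>x y. {x,y} \<in> edges (U_graph t S) \<Longrightarrow> x \<noteq> y \<Longrightarrow> c x \<noteq> c y"
    using c unfolding proper_coloring_def by blast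
  have Cs: "?C \<subseteq> {0..<k-1}" using cb by (auto simp: U_graph_def verts_def)
  hence finC: "finite ?C" using finite_subset by blast
  define D where "D m = (\<lambda>v. c (Base m v)) ` verts (S m)" for m
  have Ds: "D m \<subseteq> {0..<k-1}" if m: "m \<in> {1..t}" for m
    using cb m unfolding D_def by (auto simp: U_graph_def verts_def)
  have Dc: "k - m \<le> card (D m)" if m: "m \<in> {1..t}" for m
  proof -
    have "proper_coloring (S m) (k - 1) (\<lambda>v. c (Base m v))"
      unfolding proper_coloring_def
    proof (intro conjI allI impI ballI)
      fix v assume "v \<in> verts (S m)" thus "c (Base m v) < k - 1"
        using cb m by (auto simp: U_graph_def verts_def)
    next
      fix x y assume "{x,y} \<in> edges (S m)" "x \<noteq> y"
      moreover hence "{Base m x, Base m y} \<in> edges (U_graph t S)" using m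
        by (auto simp: U_graph_def edges_def)
      ultimately show "c (Base m x) \<noteq> c (Base m y)" using ce by auto
    qed
    from chrom_le[OF _ this] show ?thesis using SS m unfolding critical_def D_def by auto
  qed
  have cD: "\<forall>m\<in>{1..t}. card (?C - D m) < m"
  proof
    fix m assume m: "m \<in> {1..t}"
    have "card (?C - D m) \<le> card ({0..<k-1} - D m)" using Cs by (intro card_mono) auto
    also have "\<dots> = (k - 1) - card (D m)" using Ds[OF m] by (simp add: card_Diff_subset finite_subset)
    also have "\<dots> < m" using Dc[OF m] m k by auto
    finally show "card (?C - D m) < m" .
  qed
  obtain M g where Mg: "M \<subseteq> {1..t}" "\<forall>m\<in>M. g m \<in> D m" "?C \<subseteq> g ` M"
    using cover[OF finC cC cD] by blast
  have "\<forall>m\<in>{1..t}. \<exists>v. v \<in> verts (S m) \<and> (m \<in> M \<longrightarrow> c (Base m v) = g m)"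
  proof
    fix m assume m: "m \<in> {1..t}"
    show "\<exists>v. v \<in> verts (S m) \<and> (m \<in> M \<longrightarrow> c (Base m v) = g m)"
    proof (cases "m \<in> M")
      case True
      hence "g m \<in> D m" using Mg(2) by blast
      then obtain v where "v \<in> verts (S m)" "c (Base m v) = g m" unfolding D_def by auto
      thus ?thesis by blast
    next
      case False
      have "1 \<le> k - m" using m k by auto
      hence "1 \<le> card (D m)" using Dc[OF m] by linarith
      hence "D m \<noteq> {}" by auto
      then obtain v where "v \<in> verts (S m)" unfolding D_def by auto
      thus ?thesis using False by auto
    qed
  qed
  then obtain F where F: "\<forall>m\<in>{1..t}. F m \<in> verts (S m) \<and> (m \<in> M \<longrightarrow> c (Base m (F m)) = g m)"
    by (rule bchoice[THEN exE]) blast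
  define f where "f = restrict F {1..t}"
  have fa: "f \<in> active_tuples t S" unfolding f_def active_tuples_def using F by auto
  hence "c (Act f) \<in> ?C" unfolding U_active_def by auto
  then obtain m where m: "m \<in> M" "c (Act f) = g m" using Mg(3) by auto
  have m1: "m \<in> {1..t}" using m Mg(1) by auto
  have eq: "c (Base m (f m)) = g m" using F m m1 unfolding f_def by auto
  have "{Base m (f m), Act f} \<in> edges (U_graph t S)" using m1 fa
    by (auto simp: U_graph_def edges_def)
  hence "c (Base m (f m)) \<noteq> c (Act f)" using ce by blast
  thus False using m(2) eq by simp
qed

lemma part1:
  assumes k: "t + 2 \<le> k"
    and SS: "\<forall>j\<in>{1..t}. is_graph (S j) \<and> critical (S j) (k - j) \<and> no_isolated (S j)"
    and u: "u \<in> U_active t S"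
  shows "\<exists>c. proper_coloring (U_graph t S) (k - 1) c \<and>
            card (c ` U_active t S) \<le> t + 1 \<and>
            (\<forall>w\<in>U_active t S. w \<noteq> u \<longrightarrow> c w \<noteq> c u)"
proof -
  obtain h where h: "h \<in> active_tuples t S" "u = Act h" using u unfolding U_active_def by auto
  obtain b where b: "\<forall>j\<in>{1..t}. \<forall>v\<in>verts (S j). b j v < k - 1 \<and> j - 1 \<le> b j v \<and> (b j v = j - 1 \<longleftrightarrow> v = h j)"
     "\<forall>j\<in>{1..t}. \<forall>a a'. {a,a'} \<in> edges (S j) \<longrightarrow> a \<noteq> a' \<longrightarrow> b j a \<noteq> b j a'"
    using constr1[OF k SS h(1)] by blast
  define c where "c = (\<lambda>z. case z of Base j v \<Rightarrow> b j v | Act f \<Rightarrow> actc t b f)"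
  have fv: "\<And>f j. f \<in> active_tuples t S \<Longrightarrow> j \<in> {1..t} \<Longrightarrow> f j \<in> verts (S j)"
    unfolding active_tuples_def by auto
  have "proper_coloring (verts (U_graph t S), edges (U_graph t S) - {}) (k - 1) c"
  proof (rule proper_U_del)
    show "\<forall>m\<in>{1..t}. \<forall>v\<in>verts (S m). c (Base m v) < k - 1" using b unfolding c_def by auto
    show "\<forall>f\<in>active_tuples t S. c (Act f) < k - 1"
    proof
      fix f show "c (Act f) < k - 1" using actc_le[of t b f] k unfolding c_def by simp
    qed
    show "\<forall>m\<in>{1..t}. \<forall>a a'. {a,a'} \<in> edges (S m) \<longrightarrow> {Base m a, Base m a'} \<notin> {} \<longrightarrow> a \<noteq> a' \<longrightarrow> c (Base m a) \<noteq> c (Base m a')"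
      using b(2) unfolding c_def by auto
    show "\<forall>m\<in>{1..t}. \<forall>f\<in>active_tuples t S. {Base m (f m), Act f} \<notin> {} \<longrightarrow> c (Base m (f m)) \<noteq> c (Act f)"
    proof (intro ballI impI)
      fix m f assume m: "m \<in> {1..t}" and f: "f \<in> active_tuples t S"
      have "\<forall>j\<in>{1..t}. j - 1 \<le> b j (f j)" using b(1) fv[OF f] by blast
      from actc_ne[of m t b f, OF m this] show "c (Base m (f m)) \<noteq> c (Act f)" unfolding c_def by auto
    qed
  qed
  hence pc: "proper_coloring (U_graph t S) (k - 1) c" by (simp only: U_eq)
  have "c ` U_active t S \<subseteq> {0..t}" using actc_le[of t b] unfolding c_def U_active_def by auto
  hence card: "card (c ` U_active t S) \<le> t + 1" using card_mono[of "{0..t}"] by fastforce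
  have cu: "c u = t"
  proof -
    have "\<not> (\<exists>j\<in>{1..t}. b j (h j) \<noteq> j - 1)" using b(1) fv[OF h(1)] by auto
    thus ?thesis unfolding c_def h(2) actc_def by auto
  qed
  have uniq: "\<forall>w\<in>U_active t S. w \<noteq> u \<longrightarrow> c w \<noteq> c u"
  proof (intro ballI impI)
    fix w assume w: "w \<in> U_active t S" "w \<noteq> u"
    then obtain f where f: "f \<in> active_tuples t S" "w = Act f" unfolding U_active_def by auto
    have "f \<noteq> h" using f w h by auto
    then obtain j where j: "j \<in> {1..t}" "f j \<noteq> h j" using PiE_ext[of f "{1..t}" "\<lambda>m. verts (S m)" h]
      f(1) h(1) unfolding active_tuples_def by blast
    hence "b j (f j) \<noteq> j - 1" using b(1) fv[OF f(1) j(1)] by blast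
    from actc_lt[of j t b f, OF j(1) this] show "c w \<noteq> c u" using cu f unfolding c_def by auto
  qed
  show ?thesis using pc card uniq by blast
qed

lemma part3:
  assumes k: "t + 2 \<le> k"
    and SS: "\<forall>j\<in>{1..t}. is_graph (S j) \<and> critical (S j) (k - j) \<and> no_isolated (S j)"
    and e: "e \<in> edges (U_graph t S)"
  shows "\<exists>c. proper_coloring (delete_edge (U_graph t S) e) (k - 1) c \<and>
            card (c ` U_active t S) \<le> t"
proof -
  have fv: "\<And>f j. f \<in> active_tuples t S \<Longrightarrow> j \<in> {1..t} \<Longrightarrow> f j \<in> verts (S j)"
    unfolding active_tuples_def by auto
  have de: "delete_edge (U_graph t S) e = (verts (U_graph t S), edges (U_graph t S) - {e})"
    by (simp add: delete_edge_def)
  from e have "e \<in> {{Base m x, Base m y} | m x y. m \<in> {1..t} \<and> {x, y} \<in> edges (S m)} \<or>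
     e \<in> {{Base m (f m), Act f} | m f. m \<in> {1..t} \<and> f \<in> active_tuples t S}"
    by (simp add: edges_def U_graph_def)
  thus ?thesis
  proof
    assume "e \<in> {{Base m x, Base m y} | m x y. m \<in> {1..t} \<and> {x, y} \<in> edges (S m)}"
    then obtain m x y where m: "m \<in> {1..t}" "{x,y} \<in> edges (S m)" "e = {Base m x, Base m y}" by blast
    obtain b where b: "\<forall>j\<in>{1..t}. \<forall>v\<in>verts (S j). b j v < k - 1 \<and> j - 1 \<le> b j v"
      "\<forall>v\<in>verts (S m). b m v \<noteq> m - 1"
      "\<forall>j\<in>{1..t}. \<forall>a a'. {a,a'} \<in> edges (S j) \<longrightarrow> (j = m \<longrightarrow> {a,a'} \<noteq> {x,y}) \<longrightarrow> a \<noteq> a' \<longrightarrow> b j a \<noteq> b j a'"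
      using constr3[OF k SS m(1) m(2)] by blast
    define c where "c = (\<lambda>z. case z of Base j v \<Rightarrow> b j v | Act f \<Rightarrow> actc t b f)"
    have "proper_coloring (verts (U_graph t S), edges (U_graph t S) - {e}) (k - 1) c"
    proof (rule proper_U_del)
      show "\<forall>m\<in>{1..t}. \<forall>v\<in>verts (S m). c (Base m v) < k - 1" using b unfolding c_def by auto
      show "\<forall>f\<in>active_tuples t S. c (Act f) < k - 1"
      proof
        fix f show "c (Act f) < k - 1" using actc_le[of t b f] k unfolding c_def by simp
      qed
      show "\<forall>j\<in>{1..t}. \<forall>a a'. {a,a'} \<in> edges (S j) \<longrightarrow> {Base j a, Base j a'} \<notin> {e} \<longrightarrow> a \<noteq> a' \<longrightarrow> c (Base j a) \<noteq> c (Base j a')"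
      proof (intro ballI allI impI)
        fix j a a' assume j: "j \<in> {1..t}" and aa: "{a,a'} \<in> edges (S j)" "{Base j a, Base j a'} \<notin> {e}" "a \<noteq> a'"
        have "j = m \<longrightarrow> {a,a'} \<noteq> {x,y}"
        proof
          assume jm: "j = m"
          show "{a,a'} \<noteq> {x,y}"
          proof
            assume "{a,a'} = {x,y}"
            hence "(a = x \<and> a' = y) \<or> (a = y \<and> a' = x)" by (auto simp: doubleton_eq_iff)
            hence "{Base j a, Base j a'} = e" using m(3) jm by (auto simp: insert_commute)
            thus False using aa by simp
          qed
        qed
        thus "c (Base j a) \<noteq> c (Base j a')" using b(3) j aa unfolding c_def by auto
      qed
      show "\<forall>j\<in>{1..t}. \<forall>f\<in>active_tuples t S. {Base j (f j), Act f} \<notin> {e} \<longrightarrow> c (Base j (f j)) \<noteq> c (Act f)"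
      proof (intro ballI impI)
        fix j f assume j: "j \<in> {1..t}" and f: "f \<in> active_tuples t S"
        have "\<forall>j\<in>{1..t}. j - 1 \<le> b j (f j)" using b(1) fv[OF f] by blast
        from actc_ne[of j t b f, OF j this] show "c (Base j (f j)) \<noteq> c (Act f)" unfolding c_def by auto
      qed
    qed
    hence pc: "proper_coloring (delete_edge (U_graph t S) e) (k - 1) c" using de by simp
    have "c ` U_active t S \<subseteq> {0..<t}"
    proof
      fix z assume "z \<in> c ` U_active t S"
      then obtain f where f: "f \<in> active_tuples t S" "z = c (Act f)" unfolding U_active_def by auto
      have "b m (f m) \<noteq> m - 1" using b(2) fv[OF f(1) m(1)] by blast
      from actc_lt[of m t b f, OF m(1) this] show "z \<in> {0..<t}" using f unfolding c_def by auto
    qed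
    hence "card (c ` U_active t S) \<le> t" using card_mono[of "{0..<t}"] by fastforce
    thus ?thesis using pc by blast
  next
    assume "e \<in> {{Base m (f m), Act f} | m f. m \<in> {1..t} \<and> f \<in> active_tuples t S}"
    then obtain m h where m: "m \<in> {1..t}" "h \<in> active_tuples t S" "e = {Base m (h m), Act h}" by blast
    obtain b where b: "\<forall>j\<in>{1..t}. \<forall>v\<in>verts (S j). b j v < k - 1 \<and> j - 1 \<le> b j v \<and> (b j v = j - 1 \<longleftrightarrow> v = h j)"
       "\<forall>j\<in>{1..t}. \<forall>a a'. {a,a'} \<in> edges (S j) \<longrightarrow> a \<noteq> a' \<longrightarrow> b j a \<noteq> b j a'"
      using constr1[OF k SS m(2)] by blast
    define c where "c = (\<lambda>z. case z of Base j v \<Rightarrow> b j v | Act f \<Rightarrow> if f = h then m - 1 else actc t b f)"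
    have "proper_coloring (verts (U_graph t S), edges (U_graph t S) - {e}) (k - 1) c"
    proof (rule proper_U_del)
      show "\<forall>m\<in>{1..t}. \<forall>v\<in>verts (S m). c (Base m v) < k - 1" using b unfolding c_def by auto
      show "\<forall>f\<in>active_tuples t S. c (Act f) < k - 1"
      proof
        fix f show "c (Act f) < k - 1" using actc_le[of t b f] k m(1) unfolding c_def by auto
      qed
      show "\<forall>j\<in>{1..t}. \<forall>a a'. {a,a'} \<in> edges (S j) \<longrightarrow> {Base j a, Base j a'} \<notin> {e} \<longrightarrow> a \<noteq> a' \<longrightarrow> c (Base j a) \<noteq> c (Base j a')"
        using b(2) unfolding c_def by auto
      show "\<forall>j\<in>{1..t}. \<forall>f\<in>active_tuples t S. {Base j (f j), Act f} \<notin> {e} \<longrightarrow> c (Base j (f j)) \<noteq> c (Act f)"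
      proof (intro ballI impI)
        fix j f assume j: "j \<in> {1..t}" and f: "f \<in> active_tuples t S" and ne: "{Base j (f j), Act f} \<notin> {e}"
        show "c (Base j (f j)) \<noteq> c (Act f)"
        proof (cases "f = h")
          case True
          hence "j \<noteq> m" using ne m(3) by auto
          moreover have "b j (h j) = j - 1" using b(1) fv[OF m(2) j] j by blast
          ultimately show ?thesis using True j m(1) unfolding c_def by auto
        next
          case False
          have "\<forall>j\<in>{1..t}. j - 1 \<le> b j (f j)" using b(1) fv[OF f] by blast
          from actc_ne[of j t b f, OF j this] show ?thesis using False unfolding c_def by auto
        qed
      qed
    qed
    hence pc: "proper_coloring (delete_edge (U_graph t S) e) (k - 1) c" using de by simp
    have "c ` U_active t S \<subseteq> {0..<t}"
    proof
      fix z assume "z \<in> c ` U_active t S"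
      then obtain f where f: "f \<in> active_tuples t S" "z = c (Act f)" unfolding U_active_def by auto
      show "z \<in> {0..<t}"
      proof (cases "f = h")
        case True thus ?thesis using f m(1) unfolding c_def by auto
      next
        case False
        then obtain j where j: "j \<in> {1..t}" "f j \<noteq> h j" using PiE_ext[of f "{1..t}" "\<lambda>m. verts (S m)" h]
          f(1) m(2) unfolding active_tuples_def by blast
        hence "b j (f j) \<noteq> j - 1" using b(1) fv[OF f(1) j(1)] by blast
        from actc_lt[of j t b f, OF j(1) this] show ?thesis using False f unfolding c_def by auto
      qed
    qed
    hence "card (c ` U_active t S) \<le> t" using card_mono[of "{0..<t}"] by fastforce
    thus ?thesis using pc by blast
  qed
qed

lemma main_t:
  fixes k t :: nat and S :: "nat \<Rightarrow> 'a graph"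
  assumes k: "t + 2 \<le> k"
    and SS: "\<forall>j\<in>{1..t}. is_graph (S j) \<and> critical (S j) (k - j) \<and> no_isolated (S j)"
  shows "(\<forall>u\<in>U_active t S. \<exists>c. proper_coloring (U_graph t S) (k - 1) c \<and>
            card (c ` U_active t S) \<le> t + 1 \<and>
            (\<forall>w\<in>U_active t S. w \<noteq> u \<longrightarrow> c w \<noteq> c u))
       \<and> (\<forall>c. proper_coloring (U_graph t S) (k - 1) c \<longrightarrow>
            t + 1 \<le> card (c ` U_active t S))
       \<and> (\<forall>e\<in>edges (U_graph t S). \<exists>c.
            proper_coloring (delete_edge (U_graph t S) e) (k - 1) c \<and>
            card (c ` U_active t S) \<le> t)"
proof (intro conjI)
  show "\<forall>u\<in>U_active t S. \<exists>c. proper_coloring (U_graph t S) (k - 1) c \<and>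
            card (c ` U_active t S) \<le> t + 1 \<and>
            (\<forall>w\<in>U_active t S. w \<noteq> u \<longrightarrow> c w \<noteq> c u)"
    using part1[OF k SS] by (rule ballI)
  have SS': "\<forall>j\<in>{1..t}. is_graph (S j) \<and> critical (S j) (k - j)" using SS by blast
  show "\<forall>c. proper_coloring (U_graph t S) (k - 1) c \<longrightarrow> t + 1 \<le> card (c ` U_active t S)"
    using part2[OF k SS'] by (intro allI impI)
  show "\<forall>e\<in>edges (U_graph t S). \<exists>c.
            proper_coloring (delete_edge (U_graph t S) e) (k - 1) c \<and>
            card (c ` U_active t S) \<le> t"
    using part3[OF k SS] by (rule ballI)
qed

theorem lemma1:
  fixes k i :: nat and S :: "nat \<Rightarrow> 'a graph"
  assumes "k \<ge> 2" and "1 \<le> i" and "i \<le> k - 1"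
    and "\<And>j. 1 \<le> j \<Longrightarrow> j \<le> i - 1 \<Longrightarrow>
            is_graph (S j) \<and> triangle_free (S j) \<and> critical (S j) (k - j) \<and> no_isolated (S j)"
  shows "(\<forall>u\<in>U_active (i - 1) S. \<exists>c. proper_coloring (U_graph (i - 1) S) (k - 1) c \<and>
            card (c ` U_active (i - 1) S) \<le> i \<and>
            (\<forall>w\<in>U_active (i - 1) S. w \<noteq> u \<longrightarrow> c w \<noteq> c u))
       \<and> (\<forall>c. proper_coloring (U_graph (i - 1) S) (k - 1) c \<longrightarrow>
            i \<le> card (c ` U_active (i - 1) S))
       \<and> (\<forall>e\<in>edges (U_graph (i - 1) S). \<exists>c.
            proper_coloring (delete_edge (U_graph (i - 1) S) e) (k - 1) c \<and>
            card (c ` U_active (i - 1) S) \<le> i - 1)"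
proof -
  have k: "(i - 1) + 2 \<le> k" using assms(2,3) by simp
  have SS: "\<forall>j\<in>{1..i - 1}. is_graph (S j) \<and> critical (S j) (k - j) \<and> no_isolated (S j)"
    using assms(4) by auto
  have it: "i - 1 + 1 = i" using assms(2) by simp
  show ?thesis using main_t[OF k SS] unfolding it .
qed

end
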